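(* Let $(P,\le,\mu,\gamma)$ be an $S$-sieved preordered heap (for a semilattice $S$). Then the relation $\le$ on $P$ is a preorder.
   Context: A preordered heap is a structure $(Q,\le,\mu,\gamma)$ with $(Q,\le)$ a preorder, $\mu\colon Q\times Q\to Q$ monotonic in both arguments, $\gamma\colon Q\to Q$ antitone, satisfying $\gamma(\gamma a)=a$, $\mu(a,\gamma(\mu(\gamma b,a)))\le b$ and $\mu(\gamma(\mu(a,\gamma b)),a)\le b$ for all $a,b$. A homomorphism of preordered heaps $f\colon Q\to Q'$ is an order-preserving map with $f(\mu(a,b))=\mu'(fa,fb)$ and $f(\gamma a)=\gamma'(fa)$. Let $S$ be a semilattice (an associative, commutative, idempotent binary operation, written $xy$). Let $\{(P_x,\le_x,\mu_x,\gamma_x)\}_{x\in S}$ be preordered heaps such that for all $x,y\in S$ there is a unique preordered-heap homomorphism $\iota\colon P_x\to P_{xy}$ (a concretization), with the concretization $P_x\to P_x$ being the identity, and such that for all $x,y,z\in S$ the composite of the concretizations $P_x\to P_{xy}\to P_{xyz}$ equals the concretization $P_x\to P_{xyz}$. Let $P=\bigsqcup_{x\in S}P_x$ (disjoint union). For $a\in P_x$, $b\in P_y$ with concretizations $\iota_x\colon P_x\to P_{xy}$, $\iota_y\colon P_y\to P_{xy}$, define $\mu(a,b)=\mu_{xy}(\iota_x a,\iota_y b)$ and $\gamma(a)=\gamma_x(a)$; and define $a\le b$ iff there exist $z\in S$ and concretizations $\iota\colon P_x\to P_z$, $\iota'\colon P_y\to P_z$ with $\iota(a)\le_z\iota'(b)$.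 Then $(P,\le,\mu,\gamma)$ is called an $S$-sieved preordered heap. *)

theory Defs
  imports Main
begin

definition preordered_heap ::
  "'a set \<Rightarrow> ('a \<Rightarrow> 'a \<Rightarrow> bool) \<Rightarrow> ('a \<Rightarrow> 'a \<Rightarrow> 'a) \<Rightarrow> ('a \<Rightarrow> 'a) \<Rightarrow> bool" where
  "preordered_heap A le mu gam \<longleftrightarrow>
     (\<forall>a\<in>A. le a a) \<and>
     (\<forall>a\<in>A. \<forall>b\<in>A. \<forall>c\<in>A. le a b \<longrightarrow> le b c \<longrightarrow> le a c) \<and>
     (\<forall>a\<in>A. \<forall>b\<in>A. mu a b \<in> A) \<and>
     (\<forall>a\<in>A. gam a \<in> A) \<and>
     (\<forall>a\<in>A. \<forall>a'\<in>A. \<forall>b\<in>A. le a a' \<longrightarrow> le (mu a b) (mu a' b)) \<and>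
     (\<forall>a\<in>A. \<forall>b\<in>A. \<forall>b'\<in>A. le b b' \<longrightarrow> le (mu a b) (mu a b')) \<and>
     (\<forall>a\<in>A. \<forall>b\<in>A. le a b \<longrightarrow> le (gam b) (gam a)) \<and>
     (\<forall>a\<in>A. gam (gam a) = a) \<and>
     (\<forall>a\<in>A. \<forall>b\<in>A. le (mu a (gam (mu (gam b) a))) b) \<and>
     (\<forall>a\<in>A. \<forall>b\<in>A. le (mu (gam (mu a (gam b))) a) b)"

definition heap_hom ::
  "'a set \<Rightarrow> ('a \<Rightarrow> 'a \<Rightarrow> bool) \<Rightarrow> ('a \<Rightarrow> 'a \<Rightarrow> 'a) \<Rightarrow> ('a \<Rightarrow> 'a) \<Rightarrow>
   'b set \<Rightarrow> ('b \<Rightarrow> 'b \<Rightarrow> bool) \<Rightarrow> ('b \<Rightarrow> 'b \<Rightarrow> 'b) \<Rightarrow> ('b \<Rightarrow> 'b) \<Rightarrow> ('a \<Rightarrow> 'b) \<Rightarrow> bool" where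
  "heap_hom A le mu gam B le' mu' gam' f \<longleftrightarrow>
     (\<forall>a\<in>A. f a \<in> B) \<and>
     (\<forall>a\<in>A. \<forall>b\<in>A. le a b \<longrightarrow> le' (f a) (f b)) \<and>
     (\<forall>a\<in>A. \<forall>b\<in>A. f (mu a b) = mu' (f a) (f b)) \<and>
     (\<forall>a\<in>A. f (gam a) = gam' (f a))"

text \<open>Family of preordered heaps indexed by a semilattice (type 's, operation m):
  carriers Pc x, orders Ple x, operations Pmu x, Pgam x.
  A concretization P_x \<rightarrow> P_z is a heap homomorphism P_x \<rightarrow> P_z where z = x*y.\<close>
definition concretization ::
  "('s \<Rightarrow> 'a set) \<Rightarrow> ('s \<Rightarrow> 'a \<Rightarrow> 'a \<Rightarrow> bool) \<Rightarrow> ('s \<Rightarrow> 'a \<Rightarrow> 'a \<Rightarrow> 'a) \<Rightarrow> ('s \<Rightarrow> 'a \<Rightarrow> 'a)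
   \<Rightarrow> 's \<Rightarrow> 's \<Rightarrow> ('a \<Rightarrow> 'a) \<Rightarrow> bool" where
  "concretization Pc Ple Pmu Pgam x z f \<longleftrightarrow>
     heap_hom (Pc x) (Ple x) (Pmu x) (Pgam x) (Pc z) (Ple z) (Pmu z) (Pgam z) f"

definition sieve_family ::
  "('s \<Rightarrow> 's \<Rightarrow> 's) \<Rightarrow> ('s \<Rightarrow> 'a set) \<Rightarrow> ('s \<Rightarrow> 'a \<Rightarrow> 'a \<Rightarrow> bool) \<Rightarrow> ('s \<Rightarrow> 'a \<Rightarrow> 'a \<Rightarrow> 'a)
   \<Rightarrow> ('s \<Rightarrow> 'a \<Rightarrow> 'a) \<Rightarrow> bool" where
  "sieve_family m Pc Ple Pmu Pgam \<longleftrightarrow>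
     semilattice m \<and>
     (\<forall>x. preordered_heap (Pc x) (Ple x) (Pmu x) (Pgam x)) \<and>
     (\<forall>x y. (\<exists>f. concretization Pc Ple Pmu Pgam x (m x y) f) \<and>
            (\<forall>f g. concretization Pc Ple Pmu Pgam x (m x y) f \<longrightarrow>
                   concretization Pc Ple Pmu Pgam x (m x y) g \<longrightarrow> (\<forall>a\<in>Pc x. f a = g a))) \<and>
     (\<forall>x f. concretization Pc Ple Pmu Pgam x x f \<longrightarrow> (\<forall>a\<in>Pc x. f a = a)) \<and>
     (\<forall>x y z f g h. concretization Pc Ple Pmu Pgam x (m x y) f \<longrightarrow>
            concretization Pc Ple Pmu Pgam (m x y) (m (m x y) z) g \<longrightarrow>
            concretization Pc Ple Pmu Pgam x (m (m x y) z) h \<longrightarrow> (\<forall>a\<in>Pc x. g (f a) = h a))"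

text \<open>The disjoint union P, as tagged pairs.\<close>
definition sieved_carrier :: "('s \<Rightarrow> 'a set) \<Rightarrow> ('s \<times> 'a) set" where
  "sieved_carrier Pc = {(x, a). a \<in> Pc x}"

definition sieved_le ::
  "('s \<Rightarrow> 's \<Rightarrow> 's) \<Rightarrow> ('s \<Rightarrow> 'a set) \<Rightarrow> ('s \<Rightarrow> 'a \<Rightarrow> 'a \<Rightarrow> bool) \<Rightarrow> ('s \<Rightarrow> 'a \<Rightarrow> 'a \<Rightarrow> 'a)
   \<Rightarrow> ('s \<Rightarrow> 'a \<Rightarrow> 'a) \<Rightarrow> 's \<times> 'a \<Rightarrow> 's \<times> 'a \<Rightarrow> bool" where
  "sieved_le m Pc Ple Pmu Pgam p q \<longleftrightarrow>
     (\<exists>z w w' f g. z = m (fst p) w \<and> z = m (fst q) w' \<and>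
        concretization Pc Ple Pmu Pgam (fst p) z f \<and>
        concretization Pc Ple Pmu Pgam (fst q) z g \<and>
        Ple z (f (snd p)) (g (snd q)))"

end

theory Submission
  imports Defs
begin

lemma conc_comp:
  assumes "concretization Pc Ple Pmu Pgam x y f" "concretization Pc Ple Pmu Pgam y z g"
  shows "concretization Pc Ple Pmu Pgam x z (g \<circ> f)"
  using assms unfolding concretization_def heap_hom_def by auto

lemma conc_mem:
  assumes "concretization Pc Ple Pmu Pgam x y f" "a \<in> Pc x"
  shows "f a \<in> Pc y"
  using assms unfolding concretization_def heap_hom_def by auto

lemma conc_mono:
  assumes "concretization Pc Ple Pmu Pgam x y f" "a \<in> Pc x" "b \<in> Pc x" "Ple x a b"
  shows "Ple y (f a) (f b)"
  using assms unfolding concretization_def heap_hom_def by auto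

theorem lemma1:
  fixes m :: "'s \<Rightarrow> 's \<Rightarrow> 's"
    and Pc :: "'s \<Rightarrow> 'a set" and Ple :: "'s \<Rightarrow> 'a \<Rightarrow> 'a \<Rightarrow> bool"
    and Pmu :: "'s \<Rightarrow> 'a \<Rightarrow> 'a \<Rightarrow> 'a" and Pgam :: "'s \<Rightarrow> 'a \<Rightarrow> 'a"
  assumes "sieve_family m Pc Ple Pmu Pgam"
  shows "(\<forall>p\<in>sieved_carrier Pc. sieved_le m Pc Ple Pmu Pgam p p) \<and>
         (\<forall>p\<in>sieved_carrier Pc. \<forall>q\<in>sieved_carrier Pc. \<forall>r\<in>sieved_carrier Pc.
            sieved_le m Pc Ple Pmu Pgam p q \<longrightarrow> sieved_le m Pc Ple Pmu Pgam q r \<longrightarrow>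
            sieved_le m Pc Ple Pmu Pgam p r)"
proof -
  have A1: "semilattice m" and ph: "\<And>x. preordered_heap (Pc x) (Ple x) (Pmu x) (Pgam x)"
    and A3: "\<forall>x y. (\<exists>f. concretization Pc Ple Pmu Pgam x (m x y) f) \<and>
            (\<forall>f g. concretization Pc Ple Pmu Pgam x (m x y) f \<longrightarrow>
                   concretization Pc Ple Pmu Pgam x (m x y) g \<longrightarrow> (\<forall>a\<in>Pc x. f a = g a))"
    using assms unfolding sieve_family_def by (elim conjE; blast)+
  interpret sl: semilattice m by (rule A1)
  have refl: "\<And>x a. a \<in> Pc x \<Longrightarrow> Ple x a a"
  proof -
    fix x a assume "a \<in> Pc x"
    moreover have "\<forall>a\<in>Pc x. Ple x a a"
      using ph[of x] unfolding preordered_heap_def by (elim conjE)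
    ultimately show "Ple x a a" by blast
  qed
  have trans: "\<And>x a b c. a \<in> Pc x \<Longrightarrow> b \<in> Pc x \<Longrightarrow> c \<in> Pc x \<Longrightarrow> Ple x a b \<Longrightarrow> Ple x b c \<Longrightarrow> Ple x a c"
  proof -
    fix x a b c assume "a \<in> Pc x" "b \<in> Pc x" "c \<in> Pc x" "Ple x a b" "Ple x b c"
    moreover have "\<forall>a\<in>Pc x. \<forall>b\<in>Pc x. \<forall>c\<in>Pc x. Ple x a b \<longrightarrow> Ple x b c \<longrightarrow> Ple x a c"
      using ph[of x] unfolding preordered_heap_def by (elim conjE)
    ultimately show "Ple x a c" by blast
  qed
  have ex: "\<And>x y. \<exists>f. concretization Pc Ple Pmu Pgam x (m x y) f" using A3 by blast
  have uniq: "\<And>x y f g a. concretization Pc Ple Pmu Pgam x (m x y) f \<Longrightarrow>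
                   concretization Pc Ple Pmu Pgam x (m x y) g \<Longrightarrow> a \<in> Pc x \<Longrightarrow> f a = g a"
    using A3 by blast
  show ?thesis
  proof (intro conjI ballI impI)
    fix p assume "p \<in> sieved_carrier Pc"
    then obtain x a where p: "p = (x, a)" "a \<in> Pc x" unfolding sieved_carrier_def by auto
    obtain f where f: "concretization Pc Ple Pmu Pgam x (m x x) f" using ex by blast
    have "f a \<in> Pc x" using conc_mem[OF f p(2)] by simp
    then show "sieved_le m Pc Ple Pmu Pgam p p" unfolding sieved_le_def p
      using f refl by (intro exI[of _ x] exI[of _ x] exI[of _ x] exI[of _ f] exI[of _ f]) auto
  next
    fix p q r assume "p \<in> sieved_carrier Pc" "q \<in> sieved_carrier Pc" "r \<in> sieved_carrier Pc"
    then obtain x a y b u c where p: "p = (x, a)" "a \<in> Pc x" and q: "q = (y, b)" "b \<in> Pc y"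
      and r: "r = (u, c)" "c \<in> Pc u" unfolding sieved_carrier_def by auto
    assume "sieved_le m Pc Ple Pmu Pgam p q"
    then obtain z1 w1 w1' f1 g1 where z1: "z1 = m x w1" "z1 = m y w1'"
      and f1: "concretization Pc Ple Pmu Pgam x z1 f1"
      and g1: "concretization Pc Ple Pmu Pgam y z1 g1"
      and l1: "Ple z1 (f1 a) (g1 b)" unfolding sieved_le_def p q fst_conv snd_conv by blast
    assume "sieved_le m Pc Ple Pmu Pgam q r"
    then obtain z2 w2 w2' f2 g2 where z2: "z2 = m y w2" "z2 = m u w2'"
      and f2: "concretization Pc Ple Pmu Pgam y z2 f2"
      and g2: "concretization Pc Ple Pmu Pgam u z2 g2"
      and l2: "Ple z2 (f2 b) (g2 c)" unfolding sieved_le_def q r fst_conv snd_conv by blast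
    define Z where "Z = m z1 z2"
    obtain h1 where h1: "concretization Pc Ple Pmu Pgam z1 Z h1" using ex Z_def by blast
    obtain h2 where h2: "concretization Pc Ple Pmu Pgam z2 Z h2"
      proof -
      have "Z = m z2 z1" unfolding Z_def by (rule sl.commute)
      then show ?thesis using ex[of z2 z1] that by blast
    qed
    have ZZ: "Z = m y (m w1' z2)" unfolding Z_def z1(2) by (rule sl.assoc)
    have c1: "concretization Pc Ple Pmu Pgam y (m y (m w1' z2)) (h1 \<circ> g1)"
      using conc_comp[OF g1 h1] ZZ by simp
    have c2: "concretization Pc Ple Pmu Pgam y (m y (m w1' z2)) (h2 \<circ> f2)"
      using conc_comp[OF f2 h2] ZZ by simp
    have eq: "h1 (g1 b) = h2 (f2 b)" using uniq[OF c1 c2 q(2)] by simp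
    have m1: "Ple Z (h1 (f1 a)) (h1 (g1 b))"
      by (rule conc_mono[OF h1 conc_mem[OF f1 p(2)] conc_mem[OF g1 q(2)] l1])
    have m2: "Ple Z (h2 (f2 b)) (h2 (g2 c))"
      by (rule conc_mono[OF h2 conc_mem[OF f2 q(2)] conc_mem[OF g2 r(2)] l2])
    have fin: "Ple Z (h1 (f1 a)) (h2 (g2 c))"
      using trans[OF conc_mem[OF h1 conc_mem[OF f1 p(2)]] conc_mem[OF h1 conc_mem[OF g1 q(2)]]
          conc_mem[OF h2 conc_mem[OF g2 r(2)]] m1] m2 eq by simp
    have Z1: "Z = m x (m w1 z2)" unfolding Z_def z1(1) by (rule sl.assoc)
    have Z2: "Z = m u (m w2' z1)"
    proof -
      have "Z = m z2 z1" unfolding Z_def by (rule sl.commute)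
      also have "\<dots> = m u (m w2' z1)" unfolding z2(2) by (rule sl.assoc)
      finally show ?thesis .
    qed
    show "sieved_le m Pc Ple Pmu Pgam p r" unfolding sieved_le_def p r
      using Z1 Z2 conc_comp[OF f1 h1] conc_comp[OF g2 h2] fin
      by (intro exI[of _ Z] exI[of _ "m w1 z2"] exI[of _ "m w2' z1"]
          exI[of _ "h1 \<circ> f1"] exI[of _ "h2 \<circ> g2"]) auto
  qed
qed

end
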